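(* Let $(P,F)$ be a convex Fuchsian polyhedron in $\mathbb{H}^3$ with invariant plane $\Pi$, and let $Z$ be a Fuchsian deformation of $(P,F)$. Decompose $Z=Z_v+Z_h$ into its vertical and horizontal components. Then $Z_v$ is invariant under $F$: for all $f\in F$ and $x\in P$, $Z_v(f x)=df\,(Z_v(x))$.
   Context: A convex Fuchsian polyhedron is a pair $(P,F)$ where $P$ is a convex polyhedral surface in $\mathbb{H}^3$ (boundary of a locally finite intersection of half-spaces) and $F$ is a discrete group of orientation-preserving isometries leaving invariant a totally geodesic plane $\Pi$, acting cocompactly without fixed points on $\Pi$, with $F(P)=P$ and $F$ acting freely on $P$. An infinitesimal isometric deformation of $P$ is a triangulation of the faces of $P$ with no new vertices plus a Killing field of $\mathbb{H}^3$ on each triangle, coinciding on common edges; it gives a vector field $Z$ on $P$. A Fuchsian Killing field is the extension of a Killing field $K$ of $\Pi$ defined by: at $x$ at distance $d$ from $\Pi$, with $p_d$ the orthogonal projection onto $\Pi$ of the equidistant surface at distance $d$ through $x$, its value is $(dp_d)^{-1}(K(p_d(x)))$. A Fuchsian deformation is an infinitesimal isometric deformation $Z$ such that for each $f\in F$ there is a Fuchsian Killing field $\vec f$ with $Z(fy)=df(\vec f(y)+Z(y))$ for all $y\in P$. At $x\in P$ the vertical direction is the tangent direction at $x$ of the geodesic through $x$ orthogonal to $\Pi$; horizontal directions are those orthogonal to it; $Z_v$ and $Z_h$ are the corresponding orthogonal components of $Z$. *)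

theory Defs
  imports "HOL-Analysis.Analysis"
begin

text \<open>Hyperboloid model of hyperbolic 3-space inside Minkowski space R^{3,1}
  (coordinates 1,2,3 spacelike, coordinate 4 timelike).\<close>

definition mink :: "real^4 \<Rightarrow> real^4 \<Rightarrow> real" where
  "mink x y = x$1 * y$1 + x$2 * y$2 + x$3 * y$3 - x$4 * y$4"

definition H3 :: "(real^4) set" where
  "H3 = {x. mink x x = -1 \<and> x$4 > 0}"

definition hplane :: "real^4 \<Rightarrow> (real^4) set" where
  "hplane a = {x \<in> H3. mink a x = 0}"

definition hhalf :: "real^4 \<Rightarrow> (real^4) set" where
  "hhalf a = {x \<in> H3. mink a x \<le> 0}"

text \<open>Hyperbolic convex hull of a finite set of points of H3 (geodesic segments, triangles):
  the radial projection onto H3 of the Euclidean convex hull.\<close>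
definition hhull :: "(real^4) set \<Rightarrow> (real^4) set" where
  "hhull S = {x \<in> H3. \<exists>c>0. \<exists>y \<in> convex hull S. x = c *\<^sub>R y}"

definition hopen_segment :: "real^4 \<Rightarrow> real^4 \<Rightarrow> (real^4) set" where
  "hopen_segment p q = {x \<in> H3. \<exists>c>0. \<exists>y \<in> open_segment p q. x = c *\<^sub>R y}"

definition hisom :: "real^4^4 \<Rightarrow> bool" where
  "hisom f \<longleftrightarrow> (\<forall>x y. mink (f *v x) (f *v y) = mink x y) \<and> (\<forall>x\<in>H3. f *v x \<in> H3)"

definition orient_pres_hisom :: "real^4^4 \<Rightarrow> bool" where
  "orient_pres_hisom f \<longleftrightarrow> hisom f \<and> det f > 0"

text \<open>Killing fields of H3: x \<mapsto> A x with A infinitesimally Lorentz.\<close>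
definition killing :: "real^4^4 \<Rightarrow> bool" where
  "killing A \<longleftrightarrow> (\<forall>x y. mink (A *v x) y + mink x (A *v y) = 0)"

text \<open>Killing field of the plane hplane n: restriction of an ambient Killing field tangent to it.\<close>
definition plane_killing :: "real^4 \<Rightarrow> real^4^4 \<Rightarrow> bool" where
  "plane_killing n A \<longleftrightarrow> killing A \<and> (\<forall>y \<in> hplane n. mink n (A *v y) = 0)"

text \<open>Orthogonal projection p_d onto hplane n of the equidistant surface through x
  (signed distance d with sinh d = mink n x, cosh d = sqrt(1 + (mink n x)^2)).\<close>
definition coshd :: "real^4 \<Rightarrow> real^4 \<Rightarrow> real" where
  "coshd n x = sqrt (1 + (mink n x)^2)"

definition hproj :: "real^4 \<Rightarrow> real^4 \<Rightarrow> real^4" where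
  "hproj n x = (1 / coshd n x) *\<^sub>R (x - mink n x *\<^sub>R n)"

text \<open>On the equidistant surface, p_d is the restriction of the affine map
  y \<mapsto> (y - sinh d n)/cosh d, so (dp_d)^{-1} w = cosh d \<cdot> w.\<close>
definition fuchsian_killing :: "real^4 \<Rightarrow> real^4^4 \<Rightarrow> real^4 \<Rightarrow> real^4" where
  "fuchsian_killing n A x = coshd n x *\<^sub>R (A *v hproj n x)"

definition locally_finite_planes :: "(real^4) set \<Rightarrow> bool" where
  "locally_finite_planes A \<longleftrightarrow>
     (\<forall>a\<in>A. mink a a = 1) \<and>
     (\<forall>x\<in>H3. \<exists>e>0. finite {a\<in>A. hplane a \<inter> ball x e \<noteq> {}})"

definition polyhedron_body :: "(real^4) set \<Rightarrow> (real^4) set" where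
  "polyhedron_body A = H3 \<inter> \<Inter> (hhalf ` A)"

definition convex_polyhedral_surface :: "(real^4) set \<Rightarrow> (real^4) set \<Rightarrow> bool" where
  "convex_polyhedral_surface A P \<longleftrightarrow>
     locally_finite_planes A \<and> P = (subtopology euclidean H3) frontier_of (polyhedron_body A)"

definition matrix_group :: "(real^4^4) set \<Rightarrow> bool" where
  "matrix_group F \<longleftrightarrow> mat 1 \<in> F \<and> (\<forall>f\<in>F. \<forall>g\<in>F. f ** g \<in> F) \<and>
     (\<forall>f\<in>F. invertible f \<and> matrix_inv f \<in> F)"

definition fuchsian_group :: "real^4 \<Rightarrow> (real^4^4) set \<Rightarrow> bool" where
  "fuchsian_group n F \<longleftrightarrow>
     matrix_group F \<and>
     (\<forall>f\<in>F. orient_pres_hisom f) \<and>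
     (\<forall>f\<in>F. (\<lambda>x. f *v x) ` hplane n = hplane n) \<and>
     (\<forall>f\<in>F. \<exists>e>0. \<forall>g\<in>F. norm (g - f) < e \<longrightarrow> g = f) \<and>
     (\<exists>K. compact K \<and> K \<subseteq> hplane n \<and> hplane n \<subseteq> (\<Union>f\<in>F. (\<lambda>x. f *v x) ` K)) \<and>
     (\<forall>f\<in>F. \<forall>x\<in>hplane n. f *v x = x \<longrightarrow> f = mat 1)"

definition convex_fuchsian_polyhedron ::
  "(real^4) set \<Rightarrow> (real^4) set \<Rightarrow> (real^4^4) set \<Rightarrow> real^4 \<Rightarrow> bool" where
  "convex_fuchsian_polyhedron A P F n \<longleftrightarrow>
     mink n n = 1 \<and> convex_polyhedral_surface A P \<and> fuchsian_group n F \<and>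
     (\<forall>f\<in>F. (\<lambda>x. f *v x) ` P = P) \<and>
     (\<forall>f\<in>F. \<forall>x\<in>P. f *v x = x \<longrightarrow> f = mat 1)"

definition poly_vertex :: "(real^4) set \<Rightarrow> real^4 \<Rightarrow> bool" where
  "poly_vertex A v \<longleftrightarrow> v \<in> (subtopology euclidean H3) frontier_of (polyhedron_body A) \<and>
     \<not> (\<exists>p\<in>polyhedron_body A. \<exists>q\<in>polyhedron_body A. p \<noteq> q \<and> v \<in> hopen_segment p q)"

text \<open>Triangulation of the faces of P without new vertices: a locally finite simplicial
  family of geodesic triangles (given by their vertex sets), each contained in a face
  (P meets a bounding plane), covering P.\<close>
definition face_triangulation :: "(real^4) set \<Rightarrow> (real^4) set \<Rightarrow> (real^4) set set \<Rightarrow> bool" where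
  "face_triangulation A P T \<longleftrightarrow>
     (\<forall>\<tau>\<in>T. card \<tau> = 3 \<and> independent \<tau> \<and> (\<forall>v\<in>\<tau>. poly_vertex A v) \<and>
             (\<exists>a\<in>A. hhull \<tau> \<subseteq> P \<inter> hplane a)) \<and>
     (\<forall>\<tau>1\<in>T. \<forall>\<tau>2\<in>T. \<tau>1 \<noteq> \<tau>2 \<longrightarrow> hhull \<tau>1 \<inter> hhull \<tau>2 = hhull (\<tau>1 \<inter> \<tau>2)) \<and>
     (\<forall>x\<in>H3. \<exists>e>0. finite {\<tau>\<in>T. hhull \<tau> \<inter> ball x e \<noteq> {}}) \<and>
     \<Union> (hhull ` T) = P"

definition infinitesimal_isometric_deformation ::
  "(real^4) set \<Rightarrow> (real^4) set \<Rightarrow> (real^4 \<Rightarrow> real^4) \<Rightarrow> bool" where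
  "infinitesimal_isometric_deformation A P Z \<longleftrightarrow>
     (\<exists>T. face_triangulation A P T \<and>
        (\<forall>\<tau>\<in>T. \<exists>K. killing K \<and> (\<forall>x\<in>hhull \<tau>. Z x = K *v x)))"

definition fuchsian_deformation ::
  "(real^4) set \<Rightarrow> (real^4) set \<Rightarrow> (real^4^4) set \<Rightarrow> real^4 \<Rightarrow> (real^4 \<Rightarrow> real^4) \<Rightarrow> bool" where
  "fuchsian_deformation A P F n Z \<longleftrightarrow>
     infinitesimal_isometric_deformation A P Z \<and>
     (\<forall>f\<in>F. \<exists>K. plane_killing n K \<and>
        (\<forall>y\<in>P. Z (f *v y) = f *v (fuchsian_killing n K y + Z y)))"

text \<open>Vertical direction at x: velocity of the geodesic through x orthogonal to hplane n,
  spanned by n + (mink n x) x; vertical / horizontal components w.r.t. the metric.\<close>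
definition vert_dir :: "real^4 \<Rightarrow> real^4 \<Rightarrow> real^4" where
  "vert_dir n x = n + mink n x *\<^sub>R x"

definition vert_comp :: "real^4 \<Rightarrow> (real^4 \<Rightarrow> real^4) \<Rightarrow> real^4 \<Rightarrow> real^4" where
  "vert_comp n Z x = (mink (Z x) (vert_dir n x) / mink (vert_dir n x) (vert_dir n x)) *\<^sub>R vert_dir n x"

definition horiz_comp :: "real^4 \<Rightarrow> (real^4 \<Rightarrow> real^4) \<Rightarrow> real^4 \<Rightarrow> real^4" where
  "horiz_comp n Z x = Z x - vert_comp n Z x"

end

theory Submission
  imports Defs
begin

lemma mink_add_l: "mink (x + y) z = mink x z + mink y z"
  by (simp add: mink_def algebra_simps)
lemma mink_add_r: "mink z (x + y) = mink z x + mink z y"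
  by (simp add: mink_def algebra_simps)
lemma mink_diff_l: "mink (x - y) z = mink x z - mink y z"
  by (simp add: mink_def algebra_simps)
lemma mink_diff_r: "mink z (x - y) = mink z x - mink z y"
  by (simp add: mink_def algebra_simps)
lemma mink_scale_l: "mink (c *\<^sub>R x) z = c * mink x z"
  by (simp add: mink_def algebra_simps)
lemma mink_scale_r: "mink z (c *\<^sub>R x) = c * mink z x"
  by (simp add: mink_def algebra_simps)
lemma mink_neg_l: "mink (- x) z = - mink x z"
  by (simp add: mink_def algebra_simps)
lemma mink_neg_r: "mink z (- x) = - mink z x"
  by (simp add: mink_def algebra_simps)
lemma mink_sym: "mink x y = mink y x"
  by (simp add: mink_def algebra_simps)

lemmas mink_lin = mink_add_l mink_add_r mink_diff_l mink_diff_r mink_scale_l mink_scale_r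
  mink_neg_l mink_neg_r

lemma mink_ext:
  assumes "\<And>w. mink a w = mink b w"
  shows "a = b"
proof -
  have h: "a $ i = b $ i" for i :: 4
  proof -
    have "mink a (axis i 1) = mink b (axis i 1)" by (rule assms)
    then show ?thesis
      using exhaust_4[of i] by (auto simp: mink_def axis_def)
  qed
  then show ?thesis by (simp add: vec_eq_iff)
qed

lemma timelike_unit_in_H3_or_neg:
  assumes "mink h h = -1"
  shows "h \<in> H3 \<or> - h \<in> H3"
proof -
  have "h $ 4 \<noteq> 0"
  proof
    assume "h $ 4 = 0"
    then have "mink h h \<ge> 0" by (simp add: mink_def)
    with assms show False by simp
  qed
  then show ?thesis using assms by (auto simp: H3_def mink_lin)
qed

lemma timelike_perp:
  assumes nn: "mink n n = 1" and hyp: "\<forall>y\<in>hplane n. mink m y = 0"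
    and w: "mink n w = 0" "mink w w < 0"
  shows "mink m w = 0"
proof -
  define r where "r = sqrt (- mink w w)"
  have r: "r > 0" "r * r = - mink w w" using w(2) by (auto simp: r_def)
  define h where "h = (1 / r) *\<^sub>R w"
  have hh: "mink h h = -1" using r w(2) by (simp add: h_def mink_lin)
  have nh: "mink n h = 0" using w by (simp add: h_def mink_lin)
  have "mink m h = 0"
    using timelike_unit_in_H3_or_neg[OF hh]
  proof
    assume "h \<in> H3" then show ?thesis using hyp nh by (auto simp: hplane_def)
  next
    assume "- h \<in> H3" then have "mink m (-h) = 0" using hyp nh
      by (auto simp: hplane_def mink_lin)
    then show ?thesis by (simp add: mink_lin)
  qed
  then have "(1/r) * mink m w = 0" by (simp add: h_def mink_lin)
  then show ?thesis using r by simp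
qed

lemma perp_zero:
  assumes nn: "mink n n = 1" and hyp: "\<forall>y\<in>hplane n. mink m y = 0"
    and z: "mink n z = 0"
  shows "mink m z = 0"
proof -
  define d where "d = n $ 4"
  define u where "u = axis 4 1 + d *\<^sub>R n"
  have e4n: "mink (axis 4 1) n = - d" "mink n (axis 4 1) = - d" "mink (axis 4 1) (axis 4 1) = -1"
    by (simp_all add: mink_def axis_def d_def)
  have nu: "mink n u = 0" using nn e4n by (simp add: u_def mink_lin)
  have "mink u u = -1 + d * (- d) + d * (- d) + d * d"
    using nn e4n by (simp add: u_def mink_lin)
  then have uu: "mink u u = - 1 - d * d" by simp
  have mu: "mink m u = 0"
    by (rule timelike_perp[OF nn hyp nu]) (simp add: uu, smt (verit) zero_le_square)
  define a where "a = mink u z"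
  define b where "b = mink z z"
  define t where "t = 1 / (1 + 2 * \<bar>a\<bar> + \<bar>b\<bar>)"
  have t: "t > 0" "t \<le> 1" "t * (1 + 2 * \<bar>a\<bar> + \<bar>b\<bar>) = 1"
    by (auto simp: t_def)
  have "mink (u + t *\<^sub>R z) (u + t *\<^sub>R z) = mink u u + 2 * t * a + t * t * b"
    using mink_sym[of z u] by (simp add: mink_lin a_def b_def algebra_simps)
  also have "\<dots> < 0"
  proof -
    have "2 * t * a \<le> 2 * t * \<bar>a\<bar>" using t by (simp add: mult_left_mono)
    moreover have "t * t * b \<le> t * \<bar>b\<bar>"
    proof -
      have "t * t * b \<le> t * t * \<bar>b\<bar>" using t by (simp add: mult_left_mono)
      also have "\<dots> \<le> 1 * t * \<bar>b\<bar>" using t by (intro mult_right_mono) auto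
      finally show ?thesis by simp
    qed
    moreover have "2 * t * \<bar>a\<bar> + t * \<bar>b\<bar> < 1" using t by (simp add: algebra_simps)
    ultimately show ?thesis using uu by (smt (verit) zero_le_square)
  qed
  finally have "mink m (u + t *\<^sub>R z) = 0"
    by (intro timelike_perp[OF nn hyp]) (simp_all add: mink_lin nu z)
  then have "t * mink m z = 0" using mu by (simp add: mink_lin)
  then show ?thesis using t by simp
qed

lemma par_n:
  assumes nn: "mink n n = 1" and hyp: "\<forall>y\<in>hplane n. mink m y = 0"
  shows "m = mink m n *\<^sub>R n"
proof (rule mink_ext)
  fix w
  have "mink n (w - mink n w *\<^sub>R n) = 0" using nn by (simp add: mink_lin)
  then have "mink m (w - mink n w *\<^sub>R n) = 0" by (rule perp_zero[OF nn hyp])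
  then show "mink m w = mink (mink m n *\<^sub>R n) w" by (simp add: mink_lin)
qed

lemma killing_perp_vert:
  assumes nn: "mink n n = 1" and K: "plane_killing n K" and x: "x \<in> H3"
  shows "mink (fuchsian_killing n K x) (vert_dir n x) = 0"
proof -
  define s where "s = mink n x"
  define c where "c = coshd n x"
  have q: "1 + s * s > 0" by (smt (verit) zero_le_square)
  have cc: "c = sqrt (1 + s * s)" by (simp add: c_def coshd_def s_def power2_eq_square)
  have c: "c > 0" "c * c = 1 + s * s"
    using q by (simp_all add: cc)
  define h where "h = hproj n x"
  have hdef: "h = (1 / c) *\<^sub>R (x - s *\<^sub>R n)" by (simp add: h_def hproj_def c_def s_def)
  have xh: "x = c *\<^sub>R h + s *\<^sub>R n" using c by (simp add: hdef)
  have xx: "mink x x = -1" using x by (simp add: H3_def)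
  have nh: "mink n h = 0" using nn by (simp add: hdef mink_lin s_def)
  have hh: "mink h h = -1"
  proof -
    have xn: "mink x n = s" "mink n x = s" using mink_sym[of x n] by (simp_all add: s_def)
    have "mink h h = (1/c) * (1/c) * (mink x x - s * s - s * s + s * s * 1)"
      by (simp add: hdef mink_lin xn nn)
    also have "\<dots> = (1/c) * (1/c) * (mink x x - 2 * s * s + s * s)" by simp
    also have "\<dots> = (1/c) * (1/c) * (- (c * c))" using xx c by simp
    also have "\<dots> = -1" using c(1) by (simp add: field_simps)
    finally show ?thesis .
  qed
  have kil: "killing K" and pk: "\<forall>y\<in>hplane n. mink n (K *v y) = 0"
    using K by (auto simp: plane_killing_def)
  have Khn: "mink (K *v h) n = 0"
    using timelike_unit_in_H3_or_neg[OF hh]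
  proof
    assume "h \<in> H3" then have "mink n (K *v h) = 0" using pk nh by (auto simp: hplane_def)
    then show ?thesis using mink_sym[of "K *v h" n] by simp
  next
    assume "- h \<in> H3" then have "mink n (K *v (-h)) = 0" using pk nh
      by (auto simp: hplane_def mink_lin)
    then show ?thesis using mink_sym[of "K *v h" n] by (simp add: vec.neg mink_lin)
  qed
  have Khh: "mink (K *v h) h = 0"
    using kil mink_sym[of h "K *v h"] unfolding killing_def by (metis add_cancel_right_left mult_2 mult_eq_0_iff zero_neq_numeral)
  have Khx: "mink (K *v h) x = c * mink (K *v h) h + s * mink (K *v h) n"
    by (subst xh) (simp add: mink_lin)
  have "mink (fuchsian_killing n K x) (vert_dir n x)
      = c * (mink (K *v h) n + s * mink (K *v h) x)"
    unfolding fuchsian_killing_def vert_dir_def h_def[symmetric] c_def[symmetric] s_def[symmetric]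
    by (simp add: mink_lin algebra_simps)
  also have "\<dots> = 0" by (simp add: Khx Khn Khh)
  finally show ?thesis .
qed

theorem proposition3:
  fixes A P :: "(real^4) set" and F :: "(real^4^4) set" and n :: "real^4"
    and Z :: "real^4 \<Rightarrow> real^4"
  assumes "convex_fuchsian_polyhedron A P F n"
    and "fuchsian_deformation A P F n Z"
  shows "\<forall>f\<in>F. \<forall>x\<in>P. vert_comp n Z (f *v x) = f *v (vert_comp n Z x)"
proof (intro ballI)
  fix f x assume f: "f \<in> F" and xP: "x \<in> P"
  have nn: "mink n n = 1" and PH: "P \<subseteq> H3" and fuch: "fuchsian_group n F"
    using assms(1) frontier_of_subset_topspace[of "subtopology euclidean H3" "polyhedron_body A"]
    by (auto simp: convex_fuchsian_polyhedron_def convex_polyhedral_surface_def)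
  have x: "x \<in> H3" using xP PH by auto
  have iso: "\<And>a b. mink (f *v a) (f *v b) = mink a b"
    using fuch f by (auto simp: fuchsian_group_def orient_pres_hisom_def hisom_def)
  have img: "(\<lambda>x. f *v x) ` hplane n = hplane n"
    using fuch f by (auto simp: fuchsian_group_def)
  have hyp: "\<forall>y\<in>hplane n. mink (f *v n) y = 0"
  proof
    fix y assume "y \<in> hplane n"
    then obtain z where z: "z \<in> hplane n" "y = f *v z" using img by blast
    then show "mink (f *v n) y = 0" using iso by (simp add: hplane_def)
  qed
  define \<mu> where "\<mu> = mink (f *v n) n"
  have fn: "f *v n = \<mu> *\<^sub>R n" using par_n[OF nn hyp] by (simp add: \<mu>_def)
  have mu2: "\<mu> * \<mu> = 1" using iso[of n n] nn by (simp add: fn mink_lin)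
  have nfx: "mink n (f *v x) = \<mu> * mink n x"
  proof -
    have "n = \<mu> *\<^sub>R (f *v n)" using mu2 by (simp add: fn)
    then have "mink n (f *v x) = mink (\<mu> *\<^sub>R (f *v n)) (f *v x)" by simp
    also have "\<dots> = \<mu> * mink n x" by (simp add: mink_lin iso)
    finally show ?thesis .
  qed
  have vd: "vert_dir n (f *v x) = \<mu> *\<^sub>R (f *v vert_dir n x)"
  proof -
    have n2: "n = \<mu> *\<^sub>R (f *v n)" using mu2 by (simp add: fn)
    have "vert_dir n (f *v x) = \<mu> *\<^sub>R (f *v n) + (\<mu> * mink n x) *\<^sub>R (f *v x)"
      unfolding vert_dir_def nfx using n2 by simp
    then show ?thesis
      by (simp add: vert_dir_def vec.add matrix_vector_mult_scaleR scaleR_add_right)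
  qed
  obtain K where K: "plane_killing n K"
    and ZK: "\<forall>y\<in>P. Z (f *v y) = f *v (fuchsian_killing n K y + Z y)"
    using assms(2) f by (auto simp: fuchsian_deformation_def)
  have Zfx: "Z (f *v x) = f *v (fuchsian_killing n K x + Z x)" using ZK xP by auto
  have kp: "mink (fuchsian_killing n K x) (vert_dir n x) = 0"
    by (rule killing_perp_vert[OF nn K x])
  have num: "mink (Z (f *v x)) (vert_dir n (f *v x)) = \<mu> * mink (Z x) (vert_dir n x)"
    by (simp add: Zfx vd mink_lin iso kp)
  have den: "mink (vert_dir n (f *v x)) (vert_dir n (f *v x)) = mink (vert_dir n x) (vert_dir n x)"
    by (simp add: vd mink_lin iso mu2 mult.assoc[symmetric])
  define M where "M = mink (Z x) (vert_dir n x)"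
  define D where "D = mink (vert_dir n x) (vert_dir n x)"
  define v where "v = f *v vert_dir n x"
  have "vert_comp n Z (f *v x) = (mink (Z (f *v x)) (vert_dir n (f *v x))
      / mink (vert_dir n (f *v x)) (vert_dir n (f *v x))) *\<^sub>R vert_dir n (f *v x)"
    by (simp only: vert_comp_def)
  also have "\<dots> = (\<mu> * M / D) *\<^sub>R vert_dir n (f *v x)"
    by (simp only: num den M_def D_def)
  also have "\<dots> = (\<mu> * M / D) *\<^sub>R (\<mu> *\<^sub>R v)"
    by (simp only: vd v_def)
  also have "\<dots> = ((\<mu> * \<mu>) * (M / D)) *\<^sub>R v"
    by (simp only: scaleR_scaleR) (simp add: field_simps)
  also have "\<dots> = f *v vert_comp n Z x"
    using mu2 M_def D_def v_def by (simp add: vert_comp_def matrix_vector_mult_scaleR)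
  finally show "vert_comp n Z (f *v x) = f *v vert_comp n Z x" .
qed

end
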